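(* For every positive integer $t$, \[ L_{\mathcal{T}_{1/2,\,1/6}}(t) - L_{\mathcal{T}_{1/3,\,1/4}}(t) = \begin{cases} d(t) - 1, & t \equiv 4 \pmod{12},\\ d(t), & \text{otherwise,}\end{cases} \] where $d(t) = \lceil t/12 \rceil$ if $t$ is even and $d(t) = 0$ if $t$ is odd.
   Context: For $u,v>0$, $\mathcal{T}_{u,v}$ denotes the closed triangle with vertices $(0,0)$, $(u,0)$, $(0,v)$, and its Ehrhart function is $L_{\mathcal{T}_{u,v}}(t) = \#\left(\mathbb{Z}^2 \cap \mathcal{T}_{tu,tv}\right)$ for positive integers $t$. *)

theory Defs
  imports Complex_Main
begin

definition triangle :: "real \<Rightarrow> real \<Rightarrow> (real \<times> real) set" where
  "triangle u v = {(x, y). 0 \<le> x \<and> 0 \<le> y \<and> x / u + y / v \<le> 1}"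

definition ehrhart_tri :: "real \<Rightarrow> real \<Rightarrow> nat \<Rightarrow> nat" where
  "ehrhart_tri u v t =
     card {(a :: int, b :: int). (real_of_int a, real_of_int b) \<in> triangle (real t * u) (real t * v)}"

end

theory Submission
  imports Defs
begin

fun cnt :: "nat \<Rightarrow> nat \<Rightarrow> nat \<Rightarrow> nat" where
  "cnt p q t = t div p + 1 + (if 0 < q \<and> q \<le> t then cnt p q (t - q) else 0)"

declare cnt.simps[simp del]

lemma le_aux1: "0 < (p::nat) \<Longrightarrow> p * a + q * b \<le> t \<Longrightarrow> a \<le> t"
proof -
  assume "0 < p" "p * a + q * b \<le> t"
  moreover have "a \<le> p * a" using \<open>0<p\<close> by simp
  ultimately show ?thesis by linarith
qed

lemma le_aux2: "0 < (q::nat) \<Longrightarrow> p * a + q * b \<le> t \<Longrightarrow> b \<le> t"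
proof -
  assume "0 < q" "p * a + q * b \<le> t"
  moreover have "b \<le> q * b" using \<open>0<q\<close> by simp
  ultimately show ?thesis by linarith
qed

lemma card_S:
  assumes "p > 0" "q > 0"
  shows "card {(a::nat,b::nat). p*a+q*b \<le> t} = cnt p q t"
proof (induction t rule: less_induct)
  case (less t)
  define S where "S t = {(a::nat,b::nat). p*a+q*b \<le> t}" for t
  have fin: "finite (S t)" for t
    by (rule finite_subset[of _ "{..t}\<times>{..t}"])
       (use assms in \<open>auto simp: S_def intro: le_aux1 le_aux2\<close>)
  have A: "{(a,b). (a,b) \<in> S t \<and> b = 0} = (\<lambda>a. (a,0)) ` {..t div p}"
    using assms by (auto simp: S_def less_eq_div_iff_mult_less_eq mult.commute)
  have cA: "card {(a,b). (a,b) \<in> S t \<and> b = 0} = t div p + 1"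
    unfolding A by (subst card_image) (auto simp: inj_on_def)
  have split: "S t = {(a,b). (a,b) \<in> S t \<and> b = 0} \<union> {(a,b). (a,b) \<in> S t \<and> b \<noteq> 0}" by auto
  show ?case
  proof (cases "q \<le> t")
    case True
    have B: "{(a,b). (a,b) \<in> S t \<and> b \<noteq> 0} = (\<lambda>(a,b). (a, Suc b)) ` S (t-q)"
    proof (rule set_eqI, clarify)
      fix a b
      show "((a,b) \<in> {(a,b). (a,b) \<in> S t \<and> b \<noteq> 0}) = ((a,b) \<in> (\<lambda>(a,b). (a, Suc b)) ` S (t-q))"
      proof
        assume h: "(a,b) \<in> {(a,b). (a,b) \<in> S t \<and> b \<noteq> 0}"
        then obtain c where c: "b = Suc c" by (cases b) auto
        have "(a,c) \<in> S (t-q)" using h c by (auto simp: S_def)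
        then show "(a,b) \<in> (\<lambda>(a,b). (a, Suc b)) ` S (t-q)" using c by force
      next
        assume "(a,b) \<in> (\<lambda>(a,b). (a, Suc b)) ` S (t-q)"
        then obtain c where "b = Suc c" "(a,c) \<in> S (t-q)" by auto
        then show "(a,b) \<in> {(a,b). (a,b) \<in> S t \<and> b \<noteq> 0}" using True by (auto simp: S_def)
      qed
    qed
    have cB: "card {(a,b). (a,b) \<in> S t \<and> b \<noteq> 0} = cnt p q (t-q)"
      unfolding B
      apply (subst card_image)
       apply (auto simp: inj_on_def)[1]
      using less[of "t-q"] assms True by (simp add: S_def)
    have "card (S t) = t div p + 1 + cnt p q (t-q)"
      apply (subst split, subst card_Un_disjoint)
      using fin[of t] cA cB by (auto intro: finite_subset)
    then show ?thesis using True assms by (simp add: S_def cnt.simps[of p q t])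
  next
    case False
    have "{(a,b). (a,b) \<in> S t \<and> b \<noteq> 0} = {}"
      using False by (auto simp: S_def) (metis le_trans mult_le_mono2 le_add2 not_le One_nat_def Suc_leI neq0_conv mult_1_right add.commute)
    then have "S t = {(a,b). (a,b) \<in> S t \<and> b = 0}" using split by auto
    then have "card (S t) = t div p + 1" using cA by simp
    then show ?thesis using False by (simp add: S_def cnt.simps[of p q t])
  qed
qed

lemma tri_mem:
  assumes "t \<ge> 1" "p > 0" "q > 0"
  shows "((real_of_int a, real_of_int b) \<in> triangle (real t * (1/real p)) (real t * (1/real q)))
     = (0 \<le> a \<and> 0 \<le> b \<and> int p * a + int q * b \<le> int t)"
proof -
  have tp: "real t > 0" using assms by simp
  have "real_of_int a / (real t * (1/real p)) + real_of_int b / (real t * (1/real q))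
        = (real p * a + real q * b) / real t" using assms by (simp add: field_simps)
  also have "\<dots> \<le> 1 \<longleftrightarrow> real p * a + real q * b \<le> real t" using tp by (simp add: divide_le_eq_1)
  also have "\<dots> \<longleftrightarrow> int p * a + int q * b \<le> int t"
    by (metis (mono_tags, opaque_lifting) of_int_le_iff of_int_add of_int_mult of_int_of_nat_eq)
  finally show ?thesis unfolding triangle_def by auto
qed

lemma ehr_eq:
  assumes "t \<ge> 1" "p > 0" "q > 0"
  shows "ehrhart_tri (1/real p) (1/real q) t = cnt p q t"
proof -
  have "{(a :: int, b :: int). (real_of_int a, real_of_int b) \<in> triangle (real t * (1/real p)) (real t * (1/real q))}
      = (\<lambda>(a,b). (int a, int b)) ` {(a::nat,b::nat). p*a+q*b \<le> t}"
  proof (rule set_eqI, clarify)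
    fix a b :: int
    show "((a,b) \<in> {(a :: int, b :: int). (real_of_int a, real_of_int b) \<in> triangle (real t * (1/real p)) (real t * (1/real q))})
      = ((a,b) \<in> (\<lambda>(a,b). (int a, int b)) ` {(a::nat,b::nat). p*a+q*b \<le> t})"
    proof
      assume "(a,b) \<in> {(a :: int, b :: int). (real_of_int a, real_of_int b) \<in> triangle (real t * (1/real p)) (real t * (1/real q))}"
      then have h: "0 \<le> a" "0 \<le> b" "int p * a + int q * b \<le> int t" using tri_mem[OF assms, of a b] by auto
      have e: "int (p * nat a + q * nat b) = int p * a + int q * b" using h by simp
      have "int (p * nat a + q * nat b) \<le> int t" using h(3) unfolding e .
      then have "p * nat a + q * nat b \<le> t" by (simp only: of_nat_le_iff)
      moreover have "(a,b) = (int (nat a), int (nat b))" using h by simp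
      ultimately show "(a,b) \<in> (\<lambda>(a,b). (int a, int b)) ` {(a::nat,b::nat). p*a+q*b \<le> t}" by force
    next
      assume "(a,b) \<in> (\<lambda>(a,b). (int a, int b)) ` {(a::nat,b::nat). p*a+q*b \<le> t}"
      then obtain m n where mn: "a = int m" "b = int n" "p*m+q*n \<le> t" by auto
      have "int (p*m+q*n) \<le> int t" using mn(3) by (simp only: of_nat_le_iff)
      then have "int p * a + int q * b \<le> int t" using mn(1,2) by simp
      then show "(a,b) \<in> {(a :: int, b :: int). (real_of_int a, real_of_int b) \<in> triangle (real t * (1/real p)) (real t * (1/real q))}"
        using tri_mem[OF assms, of a b] mn by auto
    qed
  qed
  moreover have "inj_on (\<lambda>(a,b). (int a, int b)) {(a::nat,b::nat). p*a+q*b \<le> t}"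
    by (auto simp: inj_on_def)
  ultimately show ?thesis unfolding ehrhart_tri_def
    using card_S[OF assms(2,3), of t] by (simp add: card_image)
qed

lemma cnt_shift: "0 < q \<Longrightarrow> cnt p q (t+q) = (t+q) div p + 1 + cnt p q t"
  by (subst cnt.simps) simp

lemma cnt_small: "t < q \<Longrightarrow> cnt p q t = t div p + 1"
  by (subst cnt.simps) simp

lemma cnt_shift': "0 < q \<Longrightarrow> q \<le> t \<Longrightarrow> cnt p q t = t div p + 1 + cnt p q (t - q)"
  by (subst cnt.simps) simp

lemma cnt_step26: "cnt 2 6 (t+12) = cnt 2 6 t + (t+12) div 2 + (t+6) div 2 + 2"
  using cnt_shift[of 6 2 "t+6"] cnt_shift[of 6 2 t] by (simp add: add.assoc)

lemma cnt_step34: "cnt 3 4 (t+12) = cnt 3 4 t + (t+12) div 3 + (t+8) div 3 + (t+4) div 3 + 3"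
  using cnt_shift[of 4 3 "t+8"] cnt_shift[of 4 3 "t+4"] cnt_shift[of 4 3 t] by (simp add: add.assoc)

lemma inc: "int (((s::nat)+12) div 2 + (s+6) div 2 + 2) - int ((s+12) div 3 + (s+8) div 3 + (s+4) div 3 + 3)
        = (if even s then 1 else 0)"
proof -
  obtain k r where kr: "s = r + 6*k" "r < 6" using mod_less_divisor[of 6 s]
    by (metis mod_div_mult_eq mult.commute zero_less_numeral)
  have d2: "(c + 6*k) div 2 = c div 2 + 3*k" for c :: nat
    using div_mult_self2[of 2 c "3*k"] by (simp add: mult.assoc)
  have d3: "(c + 6*k) div 3 = c div 3 + 2*k" for c :: nat
    using div_mult_self2[of 3 c "2*k"] by (simp add: mult.assoc)
  have a: "s + 12 = (r+12) + 6*k" "s + 6 = (r+6) + 6*k" "s + 8 = (r+8) + 6*k" "s + 4 = (r+4) + 6*k"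
    using kr(1) by simp_all
  have e: "even s = even r" using kr(1) by simp
  have "int ((r+12) div 2 + (r+6) div 2 + 6*k + 2) - int ((r+12) div 3 + (r+8) div 3 + (r+4) div 3 + 6*k + 3)
        = (if even r then 1 else 0)"
  proof -
    have "r = 0 \<or> r = 1 \<or> r = 2 \<or> r = 3 \<or> r = 4 \<or> r = 5" using kr(2) by linarith
    then show ?thesis by (elim disjE) simp_all
  qed
  then show ?thesis unfolding a e d2 d3 by (simp add: algebra_simps)
qed

lemma D_formula:
  "t \<ge> 1 \<Longrightarrow> int (cnt 2 6 t) - int (cnt 3 4 t)
     = (if t mod 12 = 4 then (if even t then \<lceil>real t / 12\<rceil> else 0) - 1 else (if even t then \<lceil>real t / 12\<rceil> else 0))"
proof (induction t rule: less_induct)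
  case (less t)
  show ?case
  proof (cases "t \<le> 12")
    case True
    then have "t = 1 \<or> t = 2 \<or> t = 3 \<or> t = 4 \<or> t = 5 \<or> t = 6 \<or> t = 7 \<or> t = 8 \<or> t = 9 \<or> t = 10 \<or> t = 11 \<or> t = 12"
      using less.prems by presburger
    then show ?thesis
      by (elim disjE; simp add: cnt_small cnt_shift' ceiling_eq_iff)
  next
    case False
    define s where "s = t - 12"
    have ts: "t = s + 12" "s \<ge> 1" using False s_def by auto
    have IH: "int (cnt 2 6 s) - int (cnt 3 4 s)
     = (if s mod 12 = 4 then (if even s then \<lceil>real s / 12\<rceil> else 0) - 1 else (if even s then \<lceil>real s / 12\<rceil> else 0))"
      using less.IH[of s] ts by simp
    have inc: "int ((s+12) div 2 + (s+6) div 2 + 2) - int ((s+12) div 3 + (s+8) div 3 + (s+4) div 3 + 3)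
        = (if even s then 1 else 0)" by (rule inc)
    have ce: "\<lceil>real (s+12) / 12\<rceil> = \<lceil>real s / 12\<rceil> + 1"
    proof -
      have "real (s+12) / 12 = real s / 12 + 1" by (simp add: field_simps)
      then show ?thesis by (simp only: ceiling_add_one)
    qed
    have m: "(s+12) mod 12 = s mod 12" by simp
    have ev: "even (s+12) = even s" by simp
    show ?thesis unfolding ts(1) cnt_step26 cnt_step34 m ev ce
      using IH inc by auto
  qed
qed

theorem mainTheorem13:
  fixes t :: nat
  assumes "t \<ge> 1"
  defines "d \<equiv> (if even t then \<lceil>real t / 12\<rceil> else 0)"
  shows "int (ehrhart_tri (1/2) (1/6) t) - int (ehrhart_tri (1/3) (1/4) t)
           = (if t mod 12 = 4 then d - 1 else d)"
proof -
  have "ehrhart_tri (1/2) (1/6) t = cnt 2 6 t" using ehr_eq[OF assms(1), of 2 6] by simp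
  moreover have "ehrhart_tri (1/3) (1/4) t = cnt 3 4 t" using ehr_eq[OF assms(1), of 3 4] by simp
  ultimately show ?thesis using D_formula[OF assms(1)] unfolding d_def by simp
qed

end
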